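(* For all $n\geq 1$, $s_{n,2}(112,122)=c_n=\frac{1}{n+1}\binom{2n}{n}$, the $n$-th Catalan number.
   Context: For positive integers $n,m$, $[n]_m$ denotes the regular multiset $\{1^m,\ldots,n^m\}$, and a permutation of $[n]_m$ is a sequence of length $nm$ in which each $i\in[n]$ appears exactly $m$ times. A sequence $\sigma$ contains a pattern $\pi=\pi_1\cdots\pi_k$ if it has a subsequence $\sigma_{i_1}\cdots\sigma_{i_k}$ ($i_1<\dots<i_k$) order-isomorphic to $\pi$, i.e. $\sigma_{i_a}<\sigma_{i_b}\iff\pi_a<\pi_b$ and $\sigma_{i_a}=\sigma_{i_b}\iff\pi_a=\pi_b$; otherwise it avoids $\pi$. $s_{n,m}(\Pi)$ is the number of permutations of $[n]_m$ avoiding all patterns in $\Pi$. *)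

theory Defs
  imports Main
begin

definition multiset_perms :: "nat \<Rightarrow> nat \<Rightarrow> nat list set" where
  "multiset_perms n m =
     {\<sigma>. length \<sigma> = n * m \<and> set \<sigma> \<subseteq> {1..n} \<and>
          (\<forall>i\<in>{1..n}. count_list \<sigma> i = m)}"

definition contains :: "nat list \<Rightarrow> nat list \<Rightarrow> bool" where
  "contains \<sigma> \<pi> \<longleftrightarrow>
     (\<exists>idx :: nat \<Rightarrow> nat.
        (\<forall>a b. a < b \<and> b < length \<pi> \<longrightarrow> idx a < idx b) \<and>
        (\<forall>a < length \<pi>. idx a < length \<sigma>) \<and>
        (\<forall>a < length \<pi>. \<forall>b < length \<pi>.
            (\<sigma> ! idx a < \<sigma> ! idx b \<longleftrightarrow> \<pi> ! a < \<pi> ! b) \<and>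
            (\<sigma> ! idx a = \<sigma> ! idx b \<longleftrightarrow> \<pi> ! a = \<pi> ! b)))"

definition avoids :: "nat list \<Rightarrow> nat list \<Rightarrow> bool" where
  "avoids \<sigma> \<pi> \<longleftrightarrow> \<not> contains \<sigma> \<pi>"

definition s_count :: "nat \<Rightarrow> nat \<Rightarrow> nat list set \<Rightarrow> nat" where
  "s_count n m \<Pi> = card {\<sigma> \<in> multiset_perms n m. \<forall>\<pi>\<in>\<Pi>. avoids \<sigma> \<pi>}"

end

theory Submission
  imports Defs
begin


definition ballot :: "bool list \<Rightarrow> bool" where
  "ballot w \<longleftrightarrow> (\<forall>k. count_list (take k w) False \<le> count_list (take k w) True)"

definition Bal :: "nat \<Rightarrow> nat \<Rightarrow> bool list set" where
  "Bal a b = {w. count_list w True = a \<and> count_list w False = b \<and> ballot w}"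

lemma length_bool: "length (w::bool list) = count_list w True + count_list w False"
  by (induction w) auto

lemma ballot_snoc: "ballot (w@[x]) \<longleftrightarrow> ballot w \<and> count_list (w@[x]) False \<le> count_list (w@[x]) True"
proof
  assume h: "ballot (w@[x])"
  have "ballot w"
    unfolding ballot_def
  proof
    fix k
    show "count_list (take k w) False \<le> count_list (take k w) True"
    proof (cases "k \<le> length w")
      case True
      then have "take k w = take k (w@[x])" by simp
      then show ?thesis using h unfolding ballot_def by metis
    next
      case False
      then have "take k w = take (length w) (w@[x])" by simp
      then show ?thesis using h unfolding ballot_def by metis
    qed
  qed
  moreover have "count_list (w@[x]) False \<le> count_list (w@[x]) True"
    using h unfolding ballot_def by (metis take_all order_refl)
  ultimately show "ballot w \<and> count_list (w@[x]) False \<le> count_list (w@[x]) True" by blast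
next
  assume h: "ballot w \<and> count_list (w@[x]) False \<le> count_list (w@[x]) True"
  show "ballot (w@[x])"
    unfolding ballot_def
  proof
    fix k
    show "count_list (take k (w@[x])) False \<le> count_list (take k (w@[x])) True"
    proof (cases "k \<le> length w")
      case True
      then have "take k (w@[x]) = take k w" by simp
      then show ?thesis using h unfolding ballot_def by metis
    next
      case False
      then have "take k (w@[x]) = w@[x]" by simp
      then show ?thesis using h by metis
    qed
  qed
qed

lemma ballot_Nil: "ballot []" unfolding ballot_def by simp

lemma Bal_empty: "a < b \<Longrightarrow> Bal a b = {}"
  unfolding Bal_def ballot_def by (auto, metis take_all order_refl not_le)

lemma finite_Bal: "finite (Bal a b)"
proof -
  have "Bal a b \<subseteq> {xs. set xs \<subseteq> UNIV \<and> length xs = a + b}"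
    unfolding Bal_def using length_bool by auto
  moreover have "finite {xs::bool list. set xs \<subseteq> UNIV \<and> length xs = a + b}"
    by (rule finite_lists_length_eq) simp
  ultimately show ?thesis by (rule finite_subset)
qed

lemma Bal_decomp:
  assumes "0 < a + b" "b \<le> a"
  shows "Bal a b = (if 0 < a then (\<lambda>w. w@[True]) ` Bal (a-1) b else {}) \<union>
                   (if 0 < b then (\<lambda>w. w@[False]) ` Bal a (b-1) else {})"
proof (rule set_eqI)
  fix v
  show "v \<in> Bal a b \<longleftrightarrow> v \<in> (if 0 < a then (\<lambda>w. w@[True]) ` Bal (a-1) b else {}) \<union>
                   (if 0 < b then (\<lambda>w. w@[False]) ` Bal a (b-1) else {})"
  proof
    assume v: "v \<in> Bal a b"
    then have "v \<noteq> []" using assms unfolding Bal_def by auto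
    then obtain w x where vw: "v = w @ [x]" by (metis rev_exhaust)
    show "v \<in> (if 0 < a then (\<lambda>w. w@[True]) ` Bal (a-1) b else {}) \<union>
                   (if 0 < b then (\<lambda>w. w@[False]) ` Bal a (b-1) else {})"
    proof (cases x)
      case True
      then have "w \<in> Bal (a-1) b" "0 < a" using v vw ballot_snoc unfolding Bal_def by auto
      then show ?thesis using vw True by auto
    next
      case False
      then have "w \<in> Bal a (b-1)" "0 < b" using v vw ballot_snoc unfolding Bal_def by auto
      then show ?thesis using vw False by auto
    qed
  next
    assume "v \<in> (if 0 < a then (\<lambda>w. w@[True]) ` Bal (a-1) b else {}) \<union>
                   (if 0 < b then (\<lambda>w. w@[False]) ` Bal a (b-1) else {})"
    then show "v \<in> Bal a b" using assms ballot_snoc unfolding Bal_def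
      by (auto split: if_splits)
  qed
qed

lemma card_Bal:
  "b \<le> a + 1 \<Longrightarrow> int (card (Bal a b)) =
     int ((a+b) choose b) - (if b = 0 then 0 else int ((a+b) choose (b-1)))"
proof (induction "a+b" arbitrary: a b rule: less_induct)
  case less
  show ?case
  proof (cases "b = a + 1")
    case True
    have "(a+b) choose b = (a+b) choose (b-1)"
      using True binomial_symmetric[of b "a+b"] by simp
    then show ?thesis using True Bal_empty[of a b] by simp
  next
    case False
    then have ba: "b \<le> a" using less.prems by simp
    show ?thesis
    proof (cases "a = 0")
      case True
      then have "b = 0" using ba by simp
      have "Bal 0 0 = {[]}" unfolding Bal_def by (auto simp: ballot_Nil) (metis length_bool add_0 length_0_conv)
      then show ?thesis using True \<open>b = 0\<close> by simp
    next
      case a0: False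
      have dec: "Bal a b = (\<lambda>w. w@[True]) ` Bal (a-1) b \<union>
                   (if 0 < b then (\<lambda>w. w@[False]) ` Bal a (b-1) else {})"
        using Bal_decomp[of a b] a0 ba by simp
      have IH1: "int (card (Bal (a-1) b)) =
         int ((a-1+b) choose b) - (if b = 0 then 0 else int ((a-1+b) choose (b-1)))"
        using less.hyps[of "a-1" b] a0 ba by simp
      have c1: "card ((\<lambda>w. w@[True]) ` Bal (a-1) b) = card (Bal (a-1) b)"
        by (rule card_image) (auto simp: inj_on_def)
      show ?thesis
      proof (cases "b = 0")
        case True
        then show ?thesis using dec c1 IH1 by simp
      next
        case b0: False
        have IH2: "int (card (Bal a (b-1))) =
           int ((a+(b-1)) choose (b-1)) - (if b-1 = 0 then 0 else int ((a+(b-1)) choose (b-1-1)))"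
          using less.hyps[of a "b-1"] b0 ba by simp
        have c2: "card ((\<lambda>w. w@[False]) ` Bal a (b-1)) = card (Bal a (b-1))"
          by (rule card_image) (auto simp: inj_on_def)
        have disj: "(\<lambda>w. w@[True]) ` Bal (a-1) b \<inter> (\<lambda>w. w@[False]) ` Bal a (b-1) = {}" by auto
        have "card (Bal a b) = card (Bal (a-1) b) + card (Bal a (b-1))"
          using dec b0 c1 c2 card_Un_disjoint[OF finite_imageI[OF finite_Bal] finite_imageI[OF finite_Bal] disj]
          by simp
        obtain b' where b': "b = Suc b'" using b0 by (cases b) auto
        define m where "m = a + b'"
        have e1: "a - 1 + b = m" "a + (b-1) = m" "a + b = Suc m" using a0 b' m_def by auto
        have "int (card (Bal a b)) = int (m choose b) - int (m choose b') + int (m choose b') -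
              (if b' = 0 then 0 else int (m choose (b'-1)))"
          using \<open>card (Bal a b) = _\<close> IH1 IH2 e1 b' by simp
        also have "\<dots> = int ((a+b) choose b) - (if b = 0 then 0 else int ((a+b) choose (b-1)))"
        proof (cases b')
          case 0
          then show ?thesis using e1 b' by simp
        next
          case (Suc c)
          then show ?thesis using e1 b' by simp
        qed
        finally show ?thesis .
      qed
    qed
  qed
qed



lemma card_Bal_catalan: "card (Bal n n) = ((2 * n) choose n) div (n + 1)"
proof (cases n)
  case 0
  have "Bal 0 0 = {[]}" unfolding Bal_def by (auto simp: ballot_Nil) (metis length_bool add_0 length_0_conv)
  then show ?thesis using 0 by simp
next
  case (Suc k)
  have h: "int (card (Bal n n)) = int ((2*n) choose n) - int ((2*n) choose (n-1))"
    using card_Bal[of n n] Suc by (simp add: mult_2)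
  have id: "Suc k * (Suc (k + Suc k) choose Suc k) = Suc (Suc k) * (Suc (k + Suc k) choose k)"
    by (rule Suc_times_binomial_add)
  have id2: "n * ((2*n) choose n) = (n+1) * ((2*n) choose (n-1))"
    using id Suc by (simp add: mult_2)
  have "int ((n+1) * card (Bal n n)) = int (((2*n) choose n))"
  proof -
    have "int ((n+1) * card (Bal n n)) = int (n+1) * int ((2*n) choose n) - int ((n+1) * ((2*n) choose (n-1)))"
    proof -
      have "int ((n+1) * card (Bal n n)) = int (n+1) * int (card (Bal n n))" by (simp only: of_nat_mult)
      also have "\<dots> = int (n+1) * (int ((2*n) choose n) - int ((2*n) choose (n-1)))" using h by simp
      finally show ?thesis by (simp only: right_diff_distrib of_nat_mult)
    qed
    also have "\<dots> = int (n+1) * int ((2*n) choose n) - int (n * ((2*n) choose n))"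
      using id2 by simp
    also have "\<dots> = int ((2*n) choose n)" by (simp add: algebra_simps)
    finally show ?thesis .
  qed
  then have "(n+1) * card (Bal n n) = (2*n) choose n" by linarith
  then show ?thesis by (metis nonzero_mult_div_cancel_left add_eq_0_iff_both_eq_0 one_neq_zero)
qed



lemma lt3: "(a::nat) < 3 \<longleftrightarrow> a = 0 \<or> a = 1 \<or> a = 2" by auto

lemma contains112I:
  assumes "p < q" "q < r" "r < length s" "s!p = s!q" "s!q < s!r"
  shows "contains s [1,1,2]"
  unfolding contains_def
proof (rule exI[of _ "\<lambda>a. if a = 0 then p else if a = 1 then q else r"], intro conjI allI impI)
  fix a b :: nat assume "a < b \<and> b < length [1,1,2::nat]"
  then show "(if a = 0 then p else if a = 1 then q else r) < (if b = 0 then p else if b = 1 then q else r)"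
    using assms by auto
next
  fix a :: nat assume "a < length [1,1,2::nat]"
  then show "(if a = 0 then p else if a = 1 then q else r) < length s" using assms by auto
next
  fix a b :: nat assume a: "a < length [1,1,2::nat]" and b: "b < length [1,1,2::nat]"
  from a have a': "a = 0 \<or> a = 1 \<or> a = 2" by auto
  from b have b': "b = 0 \<or> b = 1 \<or> b = 2" by auto
  show "(s ! (if a = 0 then p else if a = 1 then q else r) < s ! (if b = 0 then p else if b = 1 then q else r)) =
       ([1,1,2::nat] ! a < [1,1,2] ! b)"
    using a' b' assms by auto
  show "(s ! (if a = 0 then p else if a = 1 then q else r) = s ! (if b = 0 then p else if b = 1 then q else r)) =
       ([1,1,2::nat] ! a = [1,1,2] ! b)"
    using a' b' assms by auto
qed
lemma contains122I:
  assumes "p < q" "q < r" "r < length s" "s!p < s!q" "s!q = s!r"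
  shows "contains s [1,2,2]"
  unfolding contains_def
proof (rule exI[of _ "\<lambda>a. if a = 0 then p else if a = 1 then q else r"], intro conjI allI impI)
  fix a b :: nat assume "a < b \<and> b < length [1,2,2::nat]"
  then show "(if a = 0 then p else if a = 1 then q else r) < (if b = 0 then p else if b = 1 then q else r)"
    using assms by auto
next
  fix a :: nat assume "a < length [1,2,2::nat]"
  then show "(if a = 0 then p else if a = 1 then q else r) < length s" using assms by auto
next
  fix a b :: nat assume a: "a < length [1,2,2::nat]" and b: "b < length [1,2,2::nat]"
  from a have a': "a = 0 \<or> a = 1 \<or> a = 2" by auto
  from b have b': "b = 0 \<or> b = 1 \<or> b = 2" by auto
  show "(s ! (if a = 0 then p else if a = 1 then q else r) < s ! (if b = 0 then p else if b = 1 then q else r)) =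
       ([1,2,2::nat] ! a < [1,2,2] ! b)"
    using a' b' assms by auto
  show "(s ! (if a = 0 then p else if a = 1 then q else r) = s ! (if b = 0 then p else if b = 1 then q else r)) =
       ([1,2,2::nat] ! a = [1,2,2] ! b)"
    using a' b' assms by auto
qed
lemma contains112D:
  assumes "contains s [1,1,2]"
  shows "\<exists>p q r. p < q \<and> q < r \<and> r < length s \<and> s!p = s!q \<and> s!q < s!r"
proof -
  obtain idx where h1: "\<forall>a b. a < b \<and> b < length [1,1,2::nat] \<longrightarrow> idx a < idx b"
    and h2: "\<forall>a < length [1,1,2::nat]. idx a < length s"
    and h3: "\<forall>a < length [1,1,2::nat]. \<forall>b < length [1,1,2::nat]. (s ! idx a < s ! idx b \<longleftrightarrow> [1,1,2::nat] ! a < [1,1,2::nat] ! b) \<and>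
            (s ! idx a = s ! idx b \<longleftrightarrow> [1,1,2::nat] ! a = [1,1,2::nat] ! b)"
    using assms unfolding contains_def by blast
  have "idx 0 < idx 1" using h1[rule_format, of 0 1] by simp
  moreover have "idx 1 < idx 2" using h1[rule_format, of 1 2] by simp
  moreover have "idx 2 < length s" using h2[rule_format, of 2] by simp
  moreover have "s ! idx 0 = s ! idx 1" using h3[rule_format, of 0 1] by simp
  moreover have "s ! idx 1 < s ! idx 2" using h3[rule_format, of 1 2] by simp
  ultimately show ?thesis by blast
qed

lemma contains122D:
  assumes "contains s [1,2,2]"
  shows "\<exists>p q r. p < q \<and> q < r \<and> r < length s \<and> s!p < s!q \<and> s!q = s!r"
proof -
  obtain idx where h1: "\<forall>a b. a < b \<and> b < length [1,2,2::nat] \<longrightarrow> idx a < idx b"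
    and h2: "\<forall>a < length [1,2,2::nat]. idx a < length s"
    and h3: "\<forall>a < length [1,2,2::nat]. \<forall>b < length [1,2,2::nat]. (s ! idx a < s ! idx b \<longleftrightarrow> [1,2,2::nat] ! a < [1,2,2::nat] ! b) \<and>
            (s ! idx a = s ! idx b \<longleftrightarrow> [1,2,2::nat] ! a = [1,2,2::nat] ! b)"
    using assms unfolding contains_def by blast
  have "idx 0 < idx 1" using h1[rule_format, of 0 1] by simp
  moreover have "idx 1 < idx 2" using h1[rule_format, of 1 2] by simp
  moreover have "idx 2 < length s" using h2[rule_format, of 2] by simp
  moreover have "s ! idx 0 < s ! idx 1" using h3[rule_format, of 0 1] by simp
  moreover have "s ! idx 1 = s ! idx 2" using h3[rule_format, of 1 2] by simp
  ultimately show ?thesis by blast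
qed

lemma count_take_le: "count_list (take k xs) x \<le> count_list xs x"
proof -
  have "count_list xs x = count_list (take k xs) x + count_list (drop k xs) x"
    by (metis append_take_drop_id count_list_append)
  then show ?thesis by simp
qed

lemma count_take_mono: "i \<le> j \<Longrightarrow> count_list (take i xs) x \<le> count_list (take j xs) x"
proof -
  assume "i \<le> j"
  then have "take i xs = take i (take j xs)" by (simp add: min_def)
  then show ?thesis using count_take_le[of i "take j xs" x] by simp
qed

lemma count_take_Suc: "i < length xs \<Longrightarrow>
  count_list (take (Suc i) xs) x = count_list (take i xs) x + (if xs!i = x then 1 else 0)"
  by (simp add: take_Suc_conv_app_nth)

lemma nth_in_take: "j < i \<Longrightarrow> i \<le> length xs \<Longrightarrow> xs!j \<in> set (take i xs)"
proof -
  assume "j < i" "i \<le> length xs"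
  then have "take i xs ! j = xs ! j" "j < length (take i xs)" by auto
  then show ?thesis by (metis nth_mem)
qed


definition cv :: "bool list \<Rightarrow> nat \<Rightarrow> nat" where
  "cv b i = (if b!i then count_list (take i b) True else count_list (take i b) False)"

definition dec :: "nat \<Rightarrow> bool list \<Rightarrow> nat list" where
  "dec n b = map (\<lambda>i. n - cv b i) [0..<length b]"

lemma dec_nth: "i < length b \<Longrightarrow> dec n b ! i = n - cv b i"
  unfolding dec_def by simp

lemma dec_length[simp]: "length (dec n b) = length b"
  unfolding dec_def by simp

lemma Bal_length: "b \<in> Bal n n \<Longrightarrow> length b = 2*n"
  unfolding Bal_def using length_bool[of b] by simp

lemma Bal_prefix: "b \<in> Bal n n \<Longrightarrow> count_list (take k b) False \<le> count_list (take k b) True"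
  unfolding Bal_def ballot_def by blast

lemma Bal_T_lt:
  assumes "b \<in> Bal n n" "i < length b" "b!i"
  shows "count_list (take i b) True < n"
proof -
  have "count_list (take (Suc i) b) True = count_list (take i b) True + 1"
    using count_take_Suc[OF assms(2)] assms(3) by simp
  moreover have "count_list (take (Suc i) b) True \<le> n"
    using count_take_le[of "Suc i" b True] assms(1) unfolding Bal_def by simp
  ultimately show ?thesis by simp
qed

lemma Bal_F_lt:
  assumes "b \<in> Bal n n" "i < length b" "\<not> b!i"
  shows "count_list (take i b) False < count_list (take i b) True"
proof -
  have "count_list (take (Suc i) b) False = count_list (take i b) False + 1"
    using count_take_Suc[OF assms(2)] assms(3) by simp
  moreover have "count_list (take (Suc i) b) True = count_list (take i b) True"
    using count_take_Suc[OF assms(2)] assms(3) by simp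
  ultimately show ?thesis using Bal_prefix[OF assms(1), of "Suc i"] by simp
qed

lemma Bal_T_le: "b \<in> Bal n n \<Longrightarrow> count_list (take i b) True \<le> n"
  using count_take_le[of i b True] unfolding Bal_def by simp

lemma cv_lt: "b \<in> Bal n n \<Longrightarrow> i < length b \<Longrightarrow> cv b i < n"
  unfolding cv_def using Bal_T_lt[of b n i] Bal_F_lt[of b n i] Bal_T_le[of b n i]
  by (auto split: if_splits)

lemma cv_key:
  assumes B: "b \<in> Bal n n" and ij: "i < j" "j < length b" and c: "b!j \<or> \<not> b!i"
  shows "cv b i < cv b j"
proof -
  have il: "i < length b" using ij by simp
  have sT: "count_list (take (Suc i) b) True = count_list (take i b) True + (if b!i then 1 else 0)"
    using count_take_Suc[OF il] by (simp split: if_splits)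
  have sF: "count_list (take (Suc i) b) False = count_list (take i b) False + (if b!i then 0 else 1)"
    using count_take_Suc[OF il] by (simp split: if_splits)
  have mT: "count_list (take (Suc i) b) True \<le> count_list (take j b) True"
    by (rule count_take_mono) (use ij in simp)
  have mF: "count_list (take (Suc i) b) False \<le> count_list (take j b) False"
    by (rule count_take_mono) (use ij in simp)
  have mT0: "count_list (take i b) True \<le> count_list (take j b) True"
    by (rule count_take_mono) (use ij in simp)
  show ?thesis
  proof (cases "b!i")
    case True
    then have "b!j" using c by simp
    then show ?thesis using True sT mT unfolding cv_def by simp
  next
    case False
    note F = Bal_F_lt[OF B il False]
    show ?thesis
    proof (cases "b!j")
      case True
      then show ?thesis using False F mT0 unfolding cv_def by simp
    next
      case False2: False
      then show ?thesis using False sF mF unfolding cv_def by simp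
    qed
  qed
qed

lemma dec_lt:
  assumes B: "b \<in> Bal n n" and ij: "i < j" "j < length b" and c: "b!j \<or> \<not> b!i"
  shows "dec n b ! j < dec n b ! i"
  using cv_key[OF assms] cv_lt[OF B, of j] ij dec_nth[of i b n] dec_nth[of j b n] by simp

lemma dec_avoid112: "b \<in> Bal n n \<Longrightarrow> avoids (dec n b) [1,1,2]"
  unfolding avoids_def
proof
  assume B: "b \<in> Bal n n" and "contains (dec n b) [1,1,2]"
  then obtain p q r where h: "p < q" "q < r" "r < length (dec n b)"
    "dec n b ! p = dec n b ! q" "dec n b ! q < dec n b ! r" using contains112D by blast
  show False
  proof (cases "b!r \<or> \<not> b!q")
    case True
    then show ?thesis using dec_lt[OF B h(2), of] h by simp
  next
    case False
    then show ?thesis using dec_lt[OF B h(1), of] h by simp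
  qed
qed

lemma dec_avoid122: "b \<in> Bal n n \<Longrightarrow> avoids (dec n b) [1,2,2]"
  unfolding avoids_def
proof
  assume B: "b \<in> Bal n n" and "contains (dec n b) [1,2,2]"
  then obtain p q r where h: "p < q" "q < r" "r < length (dec n b)"
    "dec n b ! p < dec n b ! q" "dec n b ! q = dec n b ! r" using contains122D by blast
  show False
  proof (cases "b!q \<or> \<not> b!p")
    case True
    then show ?thesis using dec_lt[OF B h(1), of] h by simp
  next
    case False
    then show ?thesis using dec_lt[OF B h(2), of] h by simp
  qed
qed

lemma count_list_card: "count_list xs v = card {i. i < length xs \<and> v = xs!i}"
  by (simp add: count_list_eq_length_filter length_filter_conv_card)

lemma dec_count_le2:
  assumes B: "b \<in> Bal n n"
  shows "count_list (dec n b) v \<le> 2"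
proof -
  let ?s = "dec n b"
  define A where "A = {i. i < length ?s \<and> v = ?s!i \<and> b!i}"
  define C where "C = {i. i < length ?s \<and> v = ?s!i \<and> \<not> b!i}"
  have eq: "{i. i < length ?s \<and> v = ?s!i} = A \<union> C" unfolding A_def C_def by auto
  have fA: "finite A" "finite C" unfolding A_def C_def by auto
  have "card A \<le> Suc 0"
  proof (subst card_le_Suc0_iff_eq[OF fA(1)], intro ballI)
    fix x y assume x: "x \<in> A" and y: "y \<in> A"
    show "x = y"
    proof (rule linorder_cases[of x y])
      assume xy: "x < y"
      have "y < length b" "b!y \<or> \<not> b!x" using x y unfolding A_def by auto
      then have "dec n b ! y < dec n b ! x" using dec_lt[OF B xy] by simp
      then show ?thesis using x y unfolding A_def by simp
    next
      assume xy: "y < x"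
      have "x < length b" "b!x \<or> \<not> b!y" using x y unfolding A_def by auto
      then have "dec n b ! x < dec n b ! y" using dec_lt[OF B xy] by simp
      then show ?thesis using x y unfolding A_def by simp
    qed
  qed
  moreover have "card C \<le> Suc 0"
  proof (subst card_le_Suc0_iff_eq[OF fA(2)], intro ballI)
    fix x y assume x: "x \<in> C" and y: "y \<in> C"
    show "x = y"
    proof (rule linorder_cases[of x y])
      assume xy: "x < y"
      have "y < length b" "b!y \<or> \<not> b!x" using x y unfolding C_def by auto
      then have "dec n b ! y < dec n b ! x" using dec_lt[OF B xy] by simp
      then show ?thesis using x y unfolding C_def by simp
    next
      assume xy: "y < x"
      have "x < length b" "b!x \<or> \<not> b!y" using x y unfolding C_def by auto
      then have "dec n b ! x < dec n b ! y" using dec_lt[OF B xy] by simp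
      then show ?thesis using x y unfolding C_def by simp
    qed
  qed
  ultimately have "card (A \<union> C) \<le> 2" using card_Un_le[of A C] by simp
  then show ?thesis using eq count_list_card[of "dec n b" v] by simp
qed

lemma all2:
  assumes "finite A" "\<forall>y\<in>A. f y \<le> (2::nat)" "sum f A = 2 * card A" "x \<in> A"
  shows "f x = 2"
proof -
  have "sum f A = f x + sum f (A - {x})" using assms by (simp add: sum.remove)
  moreover have "sum f (A - {x}) \<le> card (A - {x}) * 2"
    using sum_bounded_above[of "A - {x}" f 2] assms by simp
  moreover have "card (A - {x}) = card A - 1" using assms by simp
  moreover have "card A \<ge> 1" using assms card_0_eq by fastforce
  moreover have "f x \<le> 2" using assms(2,4) by simp
  ultimately show ?thesis using assms(3) by linarith
qed

lemma dec_set: "b \<in> Bal n n \<Longrightarrow> set (dec n b) \<subseteq> {1..n}"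
proof
  fix x assume B: "b \<in> Bal n n" and "x \<in> set (dec n b)"
  then obtain i where "i < length b" "x = dec n b ! i" by (auto simp: in_set_conv_nth)
  then show "x \<in> {1..n}" using dec_nth cv_lt[OF B] by fastforce
qed

lemma dec_in_perms: "b \<in> Bal n n \<Longrightarrow> dec n b \<in> multiset_perms n 2"
proof -
  assume B: "b \<in> Bal n n"
  have len: "length (dec n b) = n * 2" using Bal_length[OF B] by simp
  have S: "set (dec n b) \<subseteq> {1..n}" by (rule dec_set[OF B])
  have sum: "sum (count_list (dec n b)) {1..n} = 2 * card {1..n}"
    using sum_count_set[OF S] len by simp
  have "\<forall>i\<in>{1..n}. count_list (dec n b) i = 2"
    using all2[OF _ _ sum] dec_count_le2[OF B] by simp
  then show ?thesis unfolding multiset_perms_def using len S by simp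
qed


lemma dec_asym:
  assumes B: "b \<in> Bal n n" and B': "b' \<in> Bal n n" and il: "i < length b"
    and len: "length b' = length b" and tk: "take i b = take i b'" and bi: "b!i" and bi': "\<not> b'!i"
  shows "dec n b ! i \<noteq> dec n b' ! i"
proof -
  have il': "i < length b'" using il len by simp
  have "dec n b ! i = n - count_list (take i b) True" using dec_nth[OF il] bi unfolding cv_def by simp
  moreover have "dec n b' ! i = n - count_list (take i b) False" using dec_nth[OF il'] bi' tk unfolding cv_def by simp
  moreover have "count_list (take i b) True < n" using Bal_T_lt[OF B il bi] .
  moreover have "count_list (take i b) False < count_list (take i b) True"
    using Bal_F_lt[OF B' il' bi'] tk by simp
  ultimately show ?thesis by simp
qed

lemma dec_inj: "inj_on (dec n) (Bal n n)"
proof (rule inj_onI)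
  fix b b' assume B: "b \<in> Bal n n" and B': "b' \<in> Bal n n" and eq: "dec n b = dec n b'"
  have len: "length b' = length b" using Bal_length[OF B] Bal_length[OF B'] by simp
  have "\<forall>i. i \<le> length b \<longrightarrow> take i b = take i b'"
  proof (intro allI)
    fix i show "i \<le> length b \<longrightarrow> take i b = take i b'"
    proof (induction i)
      case 0 show ?case by simp
    next
      case (Suc i)
      show ?case
      proof
        assume si: "Suc i \<le> length b"
        then have il: "i < length b" by simp
        have tk: "take i b = take i b'" using Suc si by simp
        have "b!i = b'!i"
        proof (rule ccontr)
          assume ne: "b!i \<noteq> b'!i"
          show False
          proof (cases "b!i")
            case True
            then show ?thesis using dec_asym[OF B B' il len tk True] ne eq by simp
          next
            case False
            have il': "i < length b'" using il len by simp
            have "b'!i" using False ne by simp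
            then show ?thesis using dec_asym[OF B' B il' len[symmetric] tk[symmetric]] False eq by simp
          qed
        qed
        then show "take (Suc i) b = take (Suc i) b'"
          using tk il len by (simp add: take_Suc_conv_app_nth)
      qed
    qed
  qed
  then show "b = b'" using len by (metis order_refl take_all)
qed

definition enc :: "nat list \<Rightarrow> bool list" where
  "enc s = map (\<lambda>i. s!i \<notin> set (take i s)) [0..<length s]"

lemma enc_snoc: "enc (xs@[x]) = enc xs @ [x \<notin> set xs]"
  unfolding enc_def by (auto simp: nth_append)

lemma take_enc: "take k (enc s) = enc (take k s)"
  unfolding enc_def by (auto simp: take_map min_def)

lemma enc_True: "count_list (enc xs) True = card (set xs)"
  by (induction xs rule: rev_induct) (simp add: enc_def, simp add: enc_snoc card_insert_if)

lemma enc_False: "count_list (enc xs) False + card (set xs) = length xs"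
  by (induction xs rule: rev_induct) (simp add: enc_def, simp add: enc_snoc card_insert_if)


definition V :: "nat \<Rightarrow> nat list set" where
  "V n = {s \<in> multiset_perms n 2. avoids s [1,1,2] \<and> avoids s [1,2,2]}"

lemma perms_set: "s \<in> multiset_perms n 2 \<Longrightarrow> set s = {1..n}"
proof -
  assume h: "s \<in> multiset_perms n 2"
  then have "set s \<subseteq> {1..n}" unfolding multiset_perms_def by simp
  moreover have "{1..n} \<subseteq> set s"
  proof
    fix v assume "v \<in> {1..n}"
    then have "count_list s v = 2" using h unfolding multiset_perms_def by simp
    then show "v \<in> set s" using count_list_0_iff[of s v] by simp
  qed
  ultimately show ?thesis by blast
qed

lemma perms_count: "s \<in> multiset_perms n 2 \<Longrightarrow> v \<in> set s \<Longrightarrow> count_list s v = 2"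
proof -
  assume h: "s \<in> multiset_perms n 2" and v: "v \<in> set s"
  then have "v \<in> {1..n}" using perms_set[OF h] by blast
  moreover have "\<forall>i\<in>{1..n}. count_list s i = 2" using h unfolding multiset_perms_def by blast
  ultimately show ?thesis by blast
qed

lemma enc_in_Bal: assumes P: "s \<in> multiset_perms n 2" shows "enc s \<in> Bal n n"
proof -
  have S: "set s = {1..n}" by (rule perms_set[OF P])
  have len: "length s = 2*n" using P unfolding multiset_perms_def by simp
  have t: "count_list (enc s) True = n" using enc_True[of s] S by simp
  have f: "count_list (enc s) False = n" using enc_False[of s] S len by simp
  have "ballot (enc s)"
    unfolding ballot_def
  proof
    fix k
    let ?t = "take k s"
    have "length ?t = sum (count_list ?t) (set ?t)" using sum_count_set[of ?t "set ?t"] by simp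
    also have "\<dots> \<le> sum (\<lambda>_. 2) (set ?t)"
    proof (rule sum_mono)
      fix v assume v: "v \<in> set ?t"
      then have "v \<in> set s" using set_take_subset by fastforce
      then have "count_list s v = 2" using perms_count[OF P] by simp
      then show "count_list ?t v \<le> 2" using count_take_le[of k s v] by simp
    qed
    finally have "length ?t \<le> card (set ?t) * 2" by simp
    then show "count_list (take k (enc s)) False \<le> count_list (take k (enc s)) True"
      using enc_True[of ?t] enc_False[of ?t] take_enc[of k s] by simp
  qed
  then show ?thesis unfolding Bal_def using t f by simp
qed

lemma two_pos:
  assumes "count_list s v = 2"
  shows "\<exists>q1 q2. q1 < q2 \<and> q2 < length s \<and> s!q1 = v \<and> s!q2 = v"
proof -
  have "card {i. i < length s \<and> v = s!i} = 2" using assms count_list_card by metis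
  then obtain x y where xy: "{i. i < length s \<and> v = s!i} = {x,y}" "x \<noteq> y" by (auto simp: card_2_iff)
  then have hx: "x < length s" "s!x = v" and hy: "y < length s" "s!y = v" by (metis (mono_tags, lifting) insertI1 insertI2 mem_Collect_eq singletonI)+
  show ?thesis
  proof (cases "x < y")
    case True then show ?thesis using hx hy by blast
  next
    case False then have "y < x" using xy(2) by simp
    then show ?thesis using hx hy by blast
  qed
qed

lemma L1:
  assumes sV: "s \<in> V n" and il: "i < length s" and lt: "s!i < v" and vn: "v \<le> n"
  shows "v \<in> set (take i s)"
proof (rule ccontr)
  assume nv: "v \<notin> set (take i s)"
  have P: "s \<in> multiset_perms n 2" and av: "avoids s [1,2,2]" using sV unfolding V_def by auto
  have "s!i \<in> set s" using il by simp
  then have "s!i \<in> {1..n}" using perms_set[OF P] by blast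
  then have "v \<in> {1..n}" using lt vn by simp
  then have "v \<in> set s" using perms_set[OF P] by blast
  then have "count_list s v = 2" by (rule perms_count[OF P])
  then obtain q1 q2 where q: "q1 < q2" "q2 < length s" "s!q1 = v" "s!q2 = v"
    using two_pos[of s v] by blast
  have "q1 < length s" using q by simp
  then have "\<not> q1 < i" using nth_in_take[of q1 i s] nv q(3) il by fastforce
  moreover have "q1 \<noteq> i" using q(3) lt by fastforce
  ultimately have "i < q1" by simp
  then have "contains s [1,2,2]" using contains122I[of i q1 q2 s] q(1,2,3,4) lt by simp
  then show False using av unfolding avoids_def by simp
qed

lemma enc_step:
  assumes sV: "s \<in> V n" and tV: "t \<in> V n" and il: "i < length s" and len: "length t = length s"
    and tk: "take i s = take i t"
    and nw: "(s!i \<in> set (take i s)) = (t!i \<in> set (take i t))"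
    and lt: "s!i < t!i"
  shows False
proof -
  have Ps: "s \<in> multiset_perms n 2" and avs: "avoids s [1,1,2]" using sV unfolding V_def by auto
  have Pt: "t \<in> multiset_perms n 2" using tV unfolding V_def by auto
  have il': "i < length t" using il len by simp
  have tin: "t!i \<in> set t" using il' by simp
  then have tn: "t!i \<le> n" using perms_set[OF Pt] by auto
  show False
  proof (cases "s!i \<in> set (take i s)")
    case False
    then have "t!i \<notin> set (take i t)" using nw by simp
    moreover have "t!i \<in> set (take i s)" using L1[OF sV il lt tn] .
    ultimately show False using tk by simp
  next
    case True
    then obtain p where p: "p < length (take i s)" "take i s ! p = s!i" by (auto simp: in_set_conv_nth)
    then have p': "p < i" "s!p = s!i" by auto
    let ?c = "t!i"
    have notin: "?c \<notin> set (drop i s)"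
    proof
      assume "?c \<in> set (drop i s)"
      then obtain k where k: "k < length (drop i s)" "drop i s ! k = ?c" by (auto simp: in_set_conv_nth)
      then have k': "i + k < length s" "s!(i+k) = ?c" by auto
      show False
      proof (cases k)
        case 0 then show False using k' lt by simp
      next
        case (Suc k0)
        then have "contains s [1,1,2]" using contains112I[of p i "i+k" s] p' k' lt by simp
        then show False using avs unfolding avoids_def by simp
      qed
    qed
    have "count_list s ?c = count_list (take i s) ?c + count_list (drop i s) ?c"
      by (metis append_take_drop_id count_list_append)
    then have "count_list (take i t) ?c = 2" using notin perms_count[OF Ps] tin perms_set[OF Ps] perms_set[OF Pt] tk by simp
    moreover have "count_list (take (Suc i) t) ?c = count_list (take i t) ?c + 1"
      using count_take_Suc[OF il'] by simp
    moreover have "count_list (take (Suc i) t) ?c \<le> count_list t ?c" by (rule count_take_le)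
    moreover have "count_list t ?c = 2" using perms_count[OF Pt tin] .
    ultimately show False by simp
  qed
qed

lemma enc_inj: "inj_on enc (V n)"
proof (rule inj_onI)
  fix s t assume sV: "s \<in> V n" and tV: "t \<in> V n" and eq: "enc s = enc t"
  have len: "length t = length s" using sV tV unfolding V_def multiset_perms_def by simp
  have "\<forall>i. i \<le> length s \<longrightarrow> take i s = take i t"
  proof (intro allI)
    fix i show "i \<le> length s \<longrightarrow> take i s = take i t"
    proof (induction i)
      case 0 show ?case by simp
    next
      case (Suc i)
      show ?case
      proof
        assume si: "Suc i \<le> length s"
        then have il: "i < length s" by simp
        have tk: "take i s = take i t" using Suc si by simp
        have "enc s ! i = enc t ! i" using eq by simp
        then have nw: "(s!i \<in> set (take i s)) = (t!i \<in> set (take i t))"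
          using il len unfolding enc_def by simp
        have "s!i = t!i"
        proof (rule linorder_cases[of "s!i" "t!i"])
          assume "s!i < t!i" then show ?thesis using enc_step[OF sV tV il len tk nw] by simp
        next
          assume "t!i < s!i" then show ?thesis
            using enc_step[OF tV sV _ len[symmetric] tk[symmetric] nw[symmetric]] il len by simp
        qed simp
        then show "take (Suc i) s = take (Suc i) t"
          using tk il len by (simp add: take_Suc_conv_app_nth)
      qed
    qed
  qed
  then show "s = t" using len by (metis order_refl take_all)
qed

lemma finite_V: "finite (V n)"
proof -
  have "V n \<subseteq> {xs. set xs \<subseteq> {1..n} \<and> length xs = n * 2}"
    unfolding V_def multiset_perms_def by auto
  moreover have "finite {xs. set xs \<subseteq> {1..n::nat} \<and> length xs = n * 2}"
    by (rule finite_lists_length_eq) simp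
  ultimately show ?thesis by (rule finite_subset)
qed

lemma card_V: "card (V n) = card (Bal n n)"
proof (rule antisym)
  show "card (V n) \<le> card (Bal n n)"
    by (rule card_inj_on_le[OF enc_inj _ finite_Bal])
       (auto simp: V_def intro: enc_in_Bal)
  show "card (Bal n n) \<le> card (V n)"
    by (rule card_inj_on_le[OF dec_inj _ finite_V])
       (unfold V_def, use dec_in_perms dec_avoid112 dec_avoid122 in blast)
qed

theorem theorem2:
  fixes n :: nat
  assumes "n \<ge> 1"
  shows "s_count n 2 {[1,1,2], [1,2,2]} = ((2 * n) choose n) div (n + 1)"
proof -
  have "s_count n 2 {[1,1,2], [1,2,2]} = card (V n)"
    unfolding s_count_def V_def by simp
  then show ?thesis using card_V card_Bal_catalan by simp
qed

end
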